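(* Let $p>11$ be prime, $q=p^h$, and let $\mathcal{F}: aX^n+bY^n=Z^n$ with $a,b\in\mathbb{F}_q$, $ab\neq0$, $n>3$, be an irreducible Fermat curve over $\mathbb{F}_q$. Suppose $n=\frac{3(p^h-1)}{p^r-1}$ for a positive integer $r$ and $a,b\in\mathbb{F}_{p^r}$. Let $\mathcal{C}$ be the curve $aX^3+bY^3=Z^3$ over $\mathbb{F}_{p^r}$ and $k:=\#\{(x_0:x_1:x_2)\in\mathcal{C}(\mathbb{F}_{p^r}) : x_0x_1x_2=0\}$. (1) If $p^r\equiv1\pmod 3$, then $N_q(\mathcal{F})=\frac{n^2}{9}\big(N_{p^r}(\mathcal{C})-k\big)+\frac{nk}{3}$. (2) If $p^r\not\equiv1\pmod3$, then $N_q(\mathcal{F})=\frac{n^2}{9}(p^r-2)+n$.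
   Context: $N_{Q}(\mathcal{X})$ denotes the number of $\mathbb{F}_{Q}$-rational points of a projective curve $\mathcal{X}$, and $\mathcal{X}(\mathbb{F}_Q)$ the set of such points. *)

theory Defs
  imports Complex_Main "HOL-Computational_Algebra.Primes"
begin

text \<open>Projective plane points over a subfield S of an ambient field: the point
  (x0:x1:x2) is the class of a nonzero triple under scaling by S - {0}.\<close>
definition proj_class :: "'a::field set \<Rightarrow> 'a \<times> 'a \<times> 'a \<Rightarrow> ('a \<times> 'a \<times> 'a) set" where
  "proj_class S v = {(c * fst v, c * fst (snd v), c * snd (snd v)) | c. c \<in> S \<and> c \<noteq> 0}"

definition proj_points :: "'a::field set \<Rightarrow> ('a \<times> 'a \<times> 'a \<Rightarrow> bool) \<Rightarrow> ('a \<times> 'a \<times> 'a) set set" where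
  "proj_points S P = proj_class S ` {v. v \<in> S \<times> S \<times> S \<and> v \<noteq> (0, 0, 0) \<and> P v}"

text \<open>The subfield F_{p^r} of a finite field, as the fixed set of Frobenius.\<close>
definition subfield_pow :: "nat \<Rightarrow> 'a::field set" where
  "subfield_pow m = {x. x ^ m = x}"

end

theory Submission
  imports Defs "HOL-Computational_Algebra.Polynomial"
begin


lemma fermat_ff:
  fixes x :: "'a::{field,finite}"
  assumes "x \<noteq> 0"
  shows "x ^ (card (UNIV::'a set) - 1) = 1"
proof -
  let ?q = "card (UNIV::'a set)"
  have "(\<Prod>y\<in>UNIV-{0}. x * y) = x ^ card (UNIV - {0::'a}) * \<Prod>(UNIV-{0})"
    by (simp add: prod.distrib)
  also have "card (UNIV - {0::'a}) = ?q - 1" by (simp add: card_Diff_singleton)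
  also have "(\<Prod>y\<in>UNIV-{0}. x * y) = (\<Prod>y\<in>UNIV-{0}. y)"
    by (rule prod.reindex_bij_witness[of _ "\<lambda>y. y / x" "\<lambda>y. x * y"]) (use assms in auto)
  finally have "\<Prod>(UNIV-{0::'a}) = x ^ (?q - 1) * \<Prod>(UNIV-{0::'a})" .
  moreover have "\<Prod>(UNIV-{0::'a}) \<noteq> 0" by simp
  ultimately show ?thesis by simp
qed

lemma of_nat_card_zero: "of_nat (card (UNIV::'a::{field,finite} set)) = (0::'a)"
proof -
  have "(\<Sum>y\<in>UNIV. y + 1) = (\<Sum>y\<in>(UNIV::'a set). y)"
    by (rule sum.reindex_bij_witness[of _ "\<lambda>y. y - 1" "\<lambda>y. y + 1"]) auto
  then show ?thesis by (simp add: sum.distrib)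
qed

lemma char_eq:
  assumes "prime p" "card (UNIV::'a::{field,finite} set) = p ^ h"
  shows "CHAR('a) = p"
proof -
  have "(of_nat p :: 'a) ^ h = 0" using of_nat_card_zero[where 'a='a] assms by (simp add: of_nat_power)
  hence "(of_nat p::'a) = 0" by simp
  hence "CHAR('a) dvd p" by (simp add: of_nat_eq_0_iff_char_dvd)
  moreover have "CHAR('a) \<noteq> 1"
    using of_nat_CHAR[where 'a='a] by auto
  ultimately show ?thesis using assms(1) prime_nat_iff by auto
qed

lemma frob_add:
  assumes "prime p" "card (UNIV::'a::{field,finite} set) = p ^ h"
  shows "((x::'a) + y) ^ (p ^ r) = x ^ (p^r) + y ^ (p^r)"
  using freshmans_dream'[of "p^r" r x y] char_eq[OF assms] assms(1) by simp

lemma card_pow_eq_le: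
  fixes c :: "'a::field"
  assumes "m > 0"
  shows "card {x. x ^ m = c} \<le> m"
proof -
  let ?P = "monom 1 m + [:-c:]"
  have deg: "degree ?P = m" using assms by (subst degree_add_eq_left) (auto simp: degree_monom_eq)
  hence "?P \<noteq> 0" using assms by auto
  hence "card {x. poly ?P x = 0} \<le> degree ?P" by (rule card_poly_roots_bound)
  moreover have "{x. poly ?P x = 0} = {x. x ^ m = c}" by (auto simp: poly_monom)
  ultimately show ?thesis using deg by simp
qed



lemma nt_div:
  fixes p h r n :: nat
  assumes "prime p" "p > 11" "r > 0" "n * (p^r - 1) = 3 * (p^h - 1)"
  shows "\<exists>m. p^h - 1 = m * (p^r - 1) \<and> n = 3 * m"
proof -
  define s t where "s = h div r" and "t = h mod r"
  have ht: "h = r * s + t" using s_def t_def by simp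
  have tr: "t < r" using assms(3) t_def by simp
  have p1: "p \<ge> 1" "p > 1" using assms(2) by auto
  have Q1: "p ^ r > 1" using p1(2) assms(3) by (metis one_less_power)
  have e: "int n * (int p ^ r - 1) = 3 * (int p ^ h - 1)"
  proof -
    have "int (n * (p^r - 1)) = int (3 * (p^h - 1))" using assms(4) by simp
    moreover have "p ^ h \<ge> 1" "p ^ r \<ge> 1" using p1 by auto
    ultimately show ?thesis by (simp add: of_nat_diff)
  qed
  have d1: "(int p ^ r - 1) dvd ((int p ^ r) ^ s - 1)"
    by (subst power_diff_1_eq) simp
  have "int p ^ h - 1 = ((int p ^ r) ^ s - 1) * int p ^ t + (int p ^ t - 1)"
    by (simp add: ht power_add power_mult algebra_simps)
  hence "3 * (int p ^ t - 1) = int n * (int p ^ r - 1) - 3 * ((int p ^ r) ^ s - 1) * int p ^ t"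
    using e by (simp add: algebra_simps)
  hence d2: "(int p ^ r - 1) dvd 3 * (int p ^ t - 1)"
    using d1 by (metis dvd_diff dvd_mult dvd_mult2 dvd_triv_right)
  have t0: "t = 0"
  proof (rule ccontr)
    assume "t \<noteq> 0"
    hence "int p ^ t > 1" using p1 by simp
    hence pos: "0 < 3 * (int p ^ t - 1)" by simp
    have "int p ^ r \<ge> int p ^ (t+1)" using tr p1 by (intro power_increasing) auto
    moreover have "int p ^ (t+1) = int p * int p ^ t" by simp
    moreover have "int p * int p ^ t \<ge> 12 * int p ^ t" using assms(2) by (intro mult_right_mono) auto
    ultimately have "3 * (int p ^ t - 1) < int p ^ r - 1" using \<open>int p ^ t > 1\<close>
      by (smt (verit))
    with zdvd_imp_le[OF d2 pos] show False by linarith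
  qed
  hence "(int p ^ r - 1) dvd (int p ^ h - 1)" using d1 by (simp add: ht power_mult)
  hence "int (p ^ r - 1) dvd int (p ^ h - 1)"
    using Q1 p1 by (simp add: of_nat_diff)
  hence "(p ^ r - 1) dvd (p ^ h - 1)" by (simp only: int_dvd_int_iff)
  then obtain m where m: "p ^ h - 1 = (p^r - 1) * m" by (auto elim: dvdE)
  have "n * (p^r - 1) = (3 * m) * (p^r - 1)" using assms(4) m by (metis mult.assoc mult.commute)
  hence "n = 3 * m" using Q1 by (metis mult_right_cancel less_numeral_extra(3) zero_less_diff)
  thus ?thesis using m by (metis mult.commute)
qed



lemma proj_class_eq: "proj_class S (x,y,z) = (\<lambda>c. (c*x,c*y,c*z)) ` (S - {0})"
  unfolding proj_class_def by auto

lemma proj_count: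
  fixes S :: "'a::field set" and P
  assumes fin: "finite S" and one: "1 \<in> S" and zero: "0 \<in> S"
    and mul: "\<And>x y. x \<in> S \<Longrightarrow> y \<in> S \<Longrightarrow> x * y \<in> S"
    and inv: "\<And>x. x \<in> S \<Longrightarrow> inverse x \<in> S"
    and hom: "\<And>c x y z. c \<in> S \<Longrightarrow> c \<noteq> 0 \<Longrightarrow> P (x,y,z) \<Longrightarrow> P (c*x, c*y, c*z)"
  shows "card (proj_points S P) * (card S - 1) = card {v. v \<in> S \<times> S \<times> S \<and> v \<noteq> (0,0,0) \<and> P v}"
proof -
  define V where "V = {v. v \<in> S \<times> S \<times> S \<and> v \<noteq> (0,0,0) \<and> P v}"
  have finV: "finite V" unfolding V_def
    by (rule finite_subset[of _ "S \<times> S \<times> S"]) (use fin in auto)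
  have sub: "proj_class S v \<subseteq> V" if "v \<in> V" for v
  proof -
    obtain x y z where v: "v = (x,y,z)" by (cases v) auto
    show ?thesis using that unfolding v proj_class_eq V_def by (auto intro: mul hom)
  qed
  have self: "v \<in> proj_class S v" if "v \<in> V" for v
  proof -
    obtain x y z where v: "v = (x,y,z)" by (cases v) auto
    show ?thesis unfolding v proj_class_eq using one by (auto intro!: image_eqI[of _ _ 1])
  qed
  have U: "\<Union> (proj_class S ` V) = V" using sub self by blast
  have cardc: "card (proj_class S v) = card S - 1" if "v \<in> V" for v
  proof -
    obtain x y z where v: "v = (x,y,z)" by (cases v) auto
    have nz: "x \<noteq> 0 \<or> y \<noteq> 0 \<or> z \<noteq> 0" using that unfolding v V_def by auto
    have "inj_on (\<lambda>c. (c*x,c*y,c*z)) (S - {0})"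
      using nz by (auto simp: inj_on_def)
    hence "card (proj_class S v) = card (S - {0})" unfolding v proj_class_eq by (rule card_image)
    also have "\<dots> = card S - 1" using fin zero by (simp add: card_Diff_singleton)
    finally show ?thesis .
  qed
  have same: "proj_class S w = proj_class S v" if "v \<in> V" "w \<in> proj_class S v" for v w
  proof -
    obtain x y z where v: "v = (x,y,z)" by (cases v) auto
    from that(2) obtain c where c: "c \<in> S" "c \<noteq> 0" "w = (c*x,c*y,c*z)"
      unfolding v proj_class_eq by auto
    show ?thesis
    proof
      show "proj_class S w \<subseteq> proj_class S v"
        unfolding c(3) v proj_class_eq
      proof (rule image_subsetI)
        fix d assume d: "d \<in> S - {0}"
        show "(d * (c * x), d * (c * y), d * (c * z)) \<in> (\<lambda>c. (c * x, c * y, c * z)) ` (S - {0})"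
          using d c by (intro image_eqI[of _ _ "d*c"]) (auto simp: mult.assoc intro: mul)
      qed
      show "proj_class S v \<subseteq> proj_class S w"
        unfolding c(3) v proj_class_eq
      proof (rule image_subsetI)
        fix d assume d: "d \<in> S - {0}"
        show "(d * x, d * y, d * z) \<in> (\<lambda>e. (e * (c * x), e * (c * y), e * (c * z))) ` (S - {0})"
          using d c by (intro image_eqI[of _ _ "d * inverse c"]) (auto simp: mult.assoc intro: mul inv)
      qed
    qed
  qed
  have disj: "\<forall>c1\<in>proj_class S ` V. \<forall>c2\<in>proj_class S ` V. c1 \<noteq> c2 \<longrightarrow> c1 \<inter> c2 = {}"
  proof (intro ballI impI)
    fix c1 c2 assume c1: "c1 \<in> proj_class S ` V" and c2: "c2 \<in> proj_class S ` V" and ne: "c1 \<noteq> c2"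
    obtain v1 where v1: "v1 \<in> V" "c1 = proj_class S v1" using c1 by auto
    obtain v2 where v2: "v2 \<in> V" "c2 = proj_class S v2" using c2 by auto
    show "c1 \<inter> c2 = {}"
    proof (rule ccontr)
      assume "c1 \<inter> c2 \<noteq> {}"
      then obtain w where "w \<in> proj_class S v1" "w \<in> proj_class S v2" using v1 v2 by auto
      hence "proj_class S v1 = proj_class S v2" using same v1 v2 by metis
      thus False using ne v1 v2 by simp
    qed
  qed
  have "(card S - 1) * card (proj_class S ` V) = card (\<Union> (proj_class S ` V))"
    apply (rule card_partition)
    subgoal using finV by simp
    subgoal using finV U by simp
    subgoal using cardc by blast
    subgoal using disj by blast
    done
  thus ?thesis unfolding proj_points_def V_def[symmetric] U by (simp add: mult.commute)
qed

lemma card_frob_le: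
  fixes Q :: nat
  assumes "Q > 1"
  shows "card {x::'a::field. x ^ Q = x} \<le> Q"
proof -
  let ?P = "monom (1::'a) Q + [:0, -1:]"
  have deg: "degree ?P = Q" using assms by (subst degree_add_eq_left) (auto simp: degree_monom_eq)
  hence "?P \<noteq> 0" using assms by auto
  hence "card {x. poly ?P x = 0} \<le> degree ?P" by (rule card_poly_roots_bound)
  moreover have "{x. poly ?P x = 0} = {x. x ^ Q = x}" by (auto simp: poly_monom)
  ultimately show ?thesis using deg by simp
qed

lemma sum_eq_max:
  fixes f :: "'b \<Rightarrow> nat"
  assumes "finite A" "\<And>t. t \<in> A \<Longrightarrow> f t \<le> m" "card A \<le> c" "sum f A = m * c" "m > 0"
  shows "card A = c \<and> (\<forall>t\<in>A. f t = m)"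
proof -
  have s1: "sum f A \<le> sum (\<lambda>_. m) A" using assms(2) by (intro sum_mono) auto
  hence "m * c \<le> card A * m" using assms(4) by simp
  hence "c \<le> card A" using assms(5) by (simp add: mult.commute)
  hence cA: "card A = c" using assms(3) by simp
  moreover have "\<forall>t\<in>A. f t = m"
  proof (rule ccontr)
    assume "\<not> (\<forall>t\<in>A. f t = m)"
    then obtain t where t: "t \<in> A" "f t \<noteq> m" by auto
    hence "f t < m" using assms(2) by (simp add: order_less_le)
    hence "sum f A < sum (\<lambda>_. m) A"
      using assms(1,2) t by (intro sum_strict_mono_ex1) auto
    thus False using assms(4) cA by (simp add: mult.commute)
  qed
  ultimately show ?thesis by simp
qed

theorem theorem5p1:
  fixes a b :: "'a::{field, finite}"
    and p h r n :: nat
  assumes "prime p" and "p > 11" and "h > 0"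
    and "card (UNIV::'a set) = p ^ h"
    and "a \<noteq> 0" and "b \<noteq> 0"
    and "n > 3"
    and "r > 0"
    and "n * (p ^ r - 1) = 3 * (p ^ h - 1)"
    and "a \<in> subfield_pow (p ^ r)" and "b \<in> subfield_pow (p ^ r)"
  shows
    "(p ^ r mod 3 = 1 \<longrightarrow>
       real (card (proj_points (UNIV::'a set) (\<lambda>(x, y, z). a * x ^ n + b * y ^ n = z ^ n)))
       = real n ^ 2 / 9 *
           (real (card (proj_points (subfield_pow (p ^ r)) (\<lambda>(x, y, z). a * x ^ 3 + b * y ^ 3 = z ^ 3)))
            - real (card (proj_points (subfield_pow (p ^ r))
                 (\<lambda>(x, y, z). a * x ^ 3 + b * y ^ 3 = z ^ 3 \<and> x * y * z = 0))))
         + real n * real (card (proj_points (subfield_pow (p ^ r))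
                 (\<lambda>(x, y, z). a * x ^ 3 + b * y ^ 3 = z ^ 3 \<and> x * y * z = 0))) / 3)
     \<and> (p ^ r mod 3 \<noteq> 1 \<longrightarrow>
       real (card (proj_points (UNIV::'a set) (\<lambda>(x, y, z). a * x ^ n + b * y ^ n = z ^ n)))
       = real n ^ 2 / 9 * (real (p ^ r) - 2) + real n)"
proof -
  let ?q = "card (UNIV::'a set)"
  define Q where "Q = p ^ r"
  define K where "K = (subfield_pow Q :: 'a set)"
  obtain m where m: "p^h - 1 = m * (p^r - 1)" "n = 3*m" using nt_div[OF assms(1,2,8,9)] by blast
  have p1: "p > 1" using assms(2) by simp
  have Q1: "Q > 1" unfolding Q_def using p1 assms(8) by (metis one_less_power)
  have qm: "?q - 1 = m * (Q - 1)" using m(1) assms(4) Q_def by simp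
  have m0: "m > 0" using m(2) assms(7) by simp
  have Kmem: "\<And>x. x \<in> K \<longleftrightarrow> x ^ Q = x" by (simp add: K_def subfield_pow_def)
  have K0: "0 \<in> K" using Q1 Kmem by simp
  have K1: "1 \<in> K" using Kmem by simp
  have Kmul: "\<And>x y. x \<in> K \<Longrightarrow> y \<in> K \<Longrightarrow> x * y \<in> K" using Kmem by (simp add: power_mult_distrib)
  have Kinv: "\<And>x. x \<in> K \<Longrightarrow> inverse x \<in> K" using Kmem by (simp add: power_inverse)
  have Kadd: "\<And>x y. x \<in> K \<Longrightarrow> y \<in> K \<Longrightarrow> x + y \<in> K"
    using Kmem frob_add[OF assms(1,4)] Q_def by simp
  have Kneg: "\<And>x. x \<in> K \<Longrightarrow> - x \<in> K"
  proof -
    fix x assume x: "x \<in> K"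
    have "(x + - x) ^ Q = x ^ Q + (- x) ^ Q" unfolding Q_def by (rule frob_add[OF assms(1,4)])
    moreover have "(0::'a) ^ Q = 0" using Q1 by simp
    ultimately have "0 = x + (- x) ^ Q" using x Kmem by simp
    hence "(- x) ^ Q = - x" by (simp add: eq_neg_iff_add_eq_0 add.commute)
    thus "- x \<in> K" using Kmem by simp
  qed
  have Kdiv: "\<And>x y. x \<in> K \<Longrightarrow> y \<in> K \<Longrightarrow> x / y \<in> K" using Kmul Kinv by (simp add: divide_inverse)
  have Kfin: "finite K" by simp
  have aK: "a \<in> K" and bK: "b \<in> K" using assms(10,11) by (simp_all add: K_def Q_def)
  have ferm: "\<And>x::'a. x \<noteq> 0 \<Longrightarrow> x ^ (?q - 1) = 1" by (rule fermat_ff)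
  have normK: "\<And>x::'a. x ^ m \<in> K"
  proof -
    fix x :: 'a
    show "x ^ m \<in> K"
    proof (cases "x = 0")
      case True thus ?thesis using m0 K0 by (simp add: zero_power)
    next
      case False
      have "(x ^ m) ^ Q = x ^ (m * (Q - 1)) * x ^ m" using Q1
        by (simp flip: power_mult power_add) (simp add: algebra_simps)
      also have "\<dots> = x ^ m" using ferm[OF False] qm by simp
      finally show ?thesis using Kmem by simp
    qed
  qed
  define f where "f t = card {x::'a. x ^ m = t}" for t
  define G where "G = {x::'a. x ^ m = 1}"
  have Gle: "card G \<le> m" unfolding G_def by (rule card_pow_eq_le[OF m0])
  have fib_card: "\<And>t x0. x0 ^ m = t \<Longrightarrow> t \<noteq> 0 \<Longrightarrow> f t = card G"
  proof -
    fix t x0 :: 'a assume x0: "x0 ^ m = t" and t: "t \<noteq> 0"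
    have x0nz: "x0 \<noteq> 0" using x0 t m0 by (auto simp: zero_power)
    have "{x. x ^ m = t} = (\<lambda>k. x0 * k) ` G"
    proof
      show "{x. x ^ m = t} \<subseteq> (\<lambda>k. x0 * k) ` G"
      proof
        fix x assume "x \<in> {x. x ^ m = t}"
        hence "x ^ m = t" by simp
        hence "(x / x0) ^ m = 1" using x0 t by (simp add: power_divide)
        hence "x / x0 \<in> G" unfolding G_def by simp
        moreover have "x = x0 * (x / x0)" using x0nz by simp
        ultimately show "x \<in> (\<lambda>k. x0 * k) ` G" by blast
      qed
      show "(\<lambda>k. x0 * k) ` G \<subseteq> {x. x ^ m = t}" using x0 by (auto simp: G_def power_mult_distrib)
    qed
    moreover have "inj_on (\<lambda>k. x0 * k) G" using x0nz by (auto simp: inj_on_def)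
    ultimately show "f t = card G" unfolding f_def by (simp add: card_image)
  qed
  define Kx where "Kx = K - {0}"
  have UN: "(UNIV - {0::'a}) = (\<Union>t\<in>Kx. {x. x ^ m = t})"
    using normK m0 by (auto simp: Kx_def zero_power)
  have sumf: "sum f Kx = m * (Q - 1)"
  proof -
    have "card (UNIV - {0::'a}) = card (\<Union>t\<in>Kx. {x. x ^ m = t})" using UN by simp
    also have "\<dots> = (\<Sum>t\<in>Kx. card {x. x ^ m = t})"
      by (rule card_UN_disjoint) (auto simp: Kx_def)
    finally show ?thesis using qm by (simp add: f_def card_Diff_singleton)
  qed
  have fle: "\<And>t. t \<in> Kx \<Longrightarrow> f t \<le> m"
  proof -
    fix t assume t: "t \<in> Kx"
    show "f t \<le> m"
    proof (cases "\<exists>x0. x0 ^ m = t")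
      case True
      then obtain x0 where "x0 ^ m = t" by blast
      thus ?thesis using fib_card t Gle by (auto simp: Kx_def)
    next
      case False
      hence "{x::'a. x ^ m = t} = {}" by auto
      thus ?thesis by (simp add: f_def)
    qed
  qed
  have KQ: "K = {x::'a. x ^ Q = x}" using Kmem by auto
  have cKx: "card Kx \<le> Q - 1"
    using card_frob_le[OF Q1, where 'a='a] K0 KQ by (simp add: Kx_def card_Diff_singleton)
  have eqs: "card Kx = Q - 1 \<and> (\<forall>t\<in>Kx. f t = m)"
    by (rule sum_eq_max[OF _ fle cKx _ m0]) (use sumf in \<open>auto simp: Kx_def mult.commute\<close>)
  have cardK1: "card K - 1 = Q - 1" using eqs K0 by (simp add: Kx_def card_Diff_singleton)
  have fK: "\<And>t. t \<in> K \<Longrightarrow> t \<noteq> 0 \<Longrightarrow> f t = m" using eqs by (simp add: Kx_def)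
  have f0: "f 0 = 1"
  proof -
    have "{x::'a. x ^ m = 0} = {0}" using m0 by (auto simp: zero_power)
    thus ?thesis by (simp add: f_def)
  qed
  define PF where "PF = (\<lambda>(x, y, z). a * x ^ n + b * y ^ n = (z::'a) ^ n)"
  define PC where "PC = (\<lambda>(x, y, z). a * x ^ 3 + b * y ^ 3 = (z::'a) ^ 3)"
  define PB where "PB = (\<lambda>(x, y, z). a * x ^ 3 + b * y ^ 3 = (z::'a) ^ 3 \<and> x * y * z = 0)"
  define NF where "NF = card (proj_points (UNIV::'a set) PF)"
  define NC where "NC = card (proj_points K PC)"
  define k where "k = card (proj_points K PB)"
  have hom: "c ^ e * (a * x ^ e + b * y ^ e) = a * (c * x) ^ e + b * (c * y) ^ e" for c x y :: 'a and e :: nat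
    by (simp add: power_mult_distrib algebra_simps)
  have hF: "NF * (?q - 1) = card {v. v \<in> UNIV \<times> UNIV \<times> UNIV \<and> v \<noteq> (0,0,0) \<and> PF v}"
    unfolding NF_def
  proof (rule proj_count)
    fix c x y z :: 'a assume "PF (x, y, z)"
    thus "PF (c * x, c * y, c * z)" unfolding PF_def using hom[of c n x y] by (simp add: power_mult_distrib)
  qed auto
  have hC: "NC * (Q - 1) = card {v. v \<in> K \<times> K \<times> K \<and> v \<noteq> (0,0,0) \<and> PC v}"
    unfolding NC_def cardK1[symmetric]
  proof (rule proj_count)
    fix c x y z :: 'a assume "PC (x, y, z)"
    thus "PC (c * x, c * y, c * z)" unfolding PC_def using hom[of c 3 x y] by (simp add: power_mult_distrib)
  qed (auto intro: K0 K1 Kmul Kinv)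
  have hB: "k * (Q - 1) = card {v. v \<in> K \<times> K \<times> K \<and> v \<noteq> (0,0,0) \<and> PB v}"
    unfolding k_def cardK1[symmetric]
  proof (rule proj_count)
    fix c x y z :: 'a assume "PB (x, y, z)"
    thus "PB (c * x, c * y, c * z)" unfolding PB_def using hom[of c 3 x y] by (auto simp: power_mult_distrib)
  qed (auto intro: K0 K1 Kmul Kinv)
  define CF where "CF = {v::'a\<times>'a\<times>'a. PF v}"
  define CC where "CC = {v. v \<in> K \<times> K \<times> K \<and> PC v}"
  define D where "D = {v. v \<in> K \<times> K \<times> K \<and> v \<noteq> (0,0,0) \<and> PC v}"
  define B where "B = {v. v \<in> K \<times> K \<times> K \<and> v \<noteq> (0,0,0) \<and> PB v}"
  define fib where "fib v = {x::'a. x ^ m = fst v} \<times> {y::'a. y ^ m = fst (snd v)} \<times> {z::'a. z ^ m = snd (snd v)}" for v :: "'a \<times> 'a \<times> 'a"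
  define w where "w v = f (fst v) * f (fst (snd v)) * f (snd (snd v))" for v :: "'a \<times> 'a \<times> 'a"
  have pw: "(x::'a) ^ n = (x ^ m) ^ 3" for x by (simp add: m(2) power_mult mult.commute)
  have CF_UN: "CF = (\<Union>v\<in>CC. fib v)"
  proof
    show "CF \<subseteq> (\<Union>v\<in>CC. fib v)"
    proof
      fix u assume "u \<in> CF"
      then obtain x y z where u: "u = (x,y,z)" "a * x ^ n + b * y ^ n = z ^ n"
        unfolding CF_def PF_def by auto
      have "(x^m, y^m, z^m) \<in> CC" using u(2) normK unfolding CC_def PC_def pw by auto
      moreover have "u \<in> fib (x^m, y^m, z^m)" unfolding fib_def u by simp
      ultimately show "u \<in> (\<Union>v\<in>CC. fib v)" by blast
    qed
    show "(\<Union>v\<in>CC. fib v) \<subseteq> CF"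
      unfolding CF_def PF_def CC_def PC_def fib_def pw by auto
  qed
  have cardCF: "card CF = (\<Sum>v\<in>CC. w v)"
  proof -
    have "card CF = (\<Sum>v\<in>CC. card (fib v))"
      unfolding CF_UN by (rule card_UN_disjoint) (auto simp: CC_def fib_def)
    also have "\<dots> = (\<Sum>v\<in>CC. w v)"
      by (rule sum.cong) (auto simp: fib_def w_def f_def card_cartesian_product)
    finally show ?thesis .
  qed
  have CCD: "CC = insert (0,0,0) D"
    using K0 by (auto simp: CC_def D_def PC_def)
  have BD: "B \<subseteq> D" by (auto simp: B_def D_def PB_def PC_def)
  have finD: "finite D" by simp
  have wA: "w v = m ^ 3" if "v \<in> D - B" for v
  proof -
    obtain x y z where v: "v = (x,y,z)" by (cases v) auto
    have "x \<in> K" "y \<in> K" "z \<in> K" "x \<noteq> 0" "y \<noteq> 0" "z \<noteq> 0"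
      using that unfolding v D_def B_def PC_def PB_def by auto
    thus ?thesis unfolding v w_def using fK by (simp add: power3_eq_cube)
  qed
  have wB: "w v = m ^ 2" if "v \<in> B" for v
  proof -
    obtain x y z where v: "v = (x,y,z)" by (cases v) auto
    have mem: "x \<in> K" "y \<in> K" "z \<in> K" and nz: "(x,y,z) \<noteq> (0,0,0)"
      and eq: "a * x ^ 3 + b * y ^ 3 = z ^ 3" and pr: "x = 0 \<or> y = 0 \<or> z = 0"
      using that unfolding v B_def PB_def by auto
    have c: "(x = 0 \<and> y \<noteq> 0 \<and> z \<noteq> 0) \<or> (x \<noteq> 0 \<and> y = 0 \<and> z \<noteq> 0) \<or> (x \<noteq> 0 \<and> y \<noteq> 0 \<and> z = 0)"
      using nz eq pr assms(5,6) by (cases "x=0"; cases "y=0"; cases "z=0") auto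
    thus ?thesis
      using c by (auto simp: v w_def fK mem f0 power2_eq_square)
  qed
  have sumCC: "(\<Sum>v\<in>CC. w v) = 1 + m^3 * card (D - B) + m^2 * card B"
  proof -
    have "(\<Sum>v\<in>CC. w v) = w (0,0,0) + (\<Sum>v\<in>D. w v)"
      unfolding CCD by (rule sum.insert) (auto simp: D_def)
    also have "(\<Sum>v\<in>D. w v) = (\<Sum>v\<in>D - B. w v) + (\<Sum>v\<in>B. w v)"
      using BD finD by (rule sum.subset_diff)
    also have "(\<Sum>v\<in>D - B. w v) = m^3 * card (D - B)" using wA by simp
    also have "(\<Sum>v\<in>B. w v) = m^2 * card B" using wB by simp
    finally show ?thesis by (simp add: w_def f0)
  qed
  have hF': "NF * (m * (Q - 1)) = m^3 * card (D - B) + m^2 * card B"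
  proof -
    have "{v. v \<in> UNIV \<times> UNIV \<times> UNIV \<and> v \<noteq> (0,0,0) \<and> PF v} = CF - {(0,0,0)}"
      by (auto simp: CF_def)
    moreover have "(0,0,0) \<in> CF" using assms(7) by (simp add: CF_def PF_def zero_power)
    ultimately have "NF * (?q - 1) = card CF - 1" using hF by simp
    thus ?thesis using cardCF sumCC qm by simp
  qed
  have cDB: "card (D - B) = card D - card B" using BD finD by (simp add: card_Diff_subset finite_subset)
  have cBD: "card B \<le> card D" using BD finD by (simp add: card_mono)
  have eNF: "card (proj_points (UNIV::'a set) (\<lambda>(x, y, z). a * x ^ n + b * y ^ n = z ^ n)) = NF"
    by (simp add: NF_def PF_def)
  have eNC: "card (proj_points (subfield_pow (p ^ r)) (\<lambda>(x, y, z). a * x ^ 3 + b * y ^ 3 = (z::'a) ^ 3)) = NC"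
    by (simp add: NC_def PC_def K_def Q_def)
  have ek: "card (proj_points (subfield_pow (p ^ r))
                 (\<lambda>(x, y, z). a * x ^ 3 + b * y ^ 3 = (z::'a) ^ 3 \<and> x * y * z = 0)) = k"
    by (simp add: k_def PB_def K_def Q_def)
  have Rpos: "real (Q - 1) > 0" using Q1 by simp
  have Mpos: "real m > 0" using m0 by simp
  have main: "real NF * (real m * real (Q - 1)) = real m ^ 3 * (real (card D) - real (card B)) + real m ^ 2 * real (card B)"
  proof -
    have "real (NF * (m * (Q - 1))) = real (m^3 * card (D - B) + m^2 * card B)" using hF' by simp
    thus ?thesis using cDB cBD by (simp add: of_nat_diff)
  qed
  have gen: "real NF = real m ^ 2 * (real NC - real k) + real m * real k"
  proof -
    have cD: "real (card D) = real NC * real (Q - 1)" using hC by (simp add: D_def flip: of_nat_mult)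
    have cB: "real (card B) = real k * real (Q - 1)" using hB by (simp add: B_def flip: of_nat_mult)
    have "real NF * (real m * real (Q - 1)) = (real m ^ 2 * (real NC - real k) + real m * real k) * (real m * real (Q - 1))"
      unfolding main cD cB by (simp add: algebra_simps power2_eq_square power3_eq_cube)
    thus ?thesis using Rpos Mpos by simp
  qed
  have part1: "real NF = real n ^ 2 / 9 * (real NC - real k) + real n * real k / 3"
    unfolding gen m(2) by (simp add: power2_eq_square)
  have part2: "real NF = real n ^ 2 / 9 * (real (p ^ r) - 2) + real n" if nm: "p ^ r mod 3 \<noteq> 1"
  proof -
    have "\<not> 3 dvd Q"
    proof
      assume "3 dvd Q"
      hence "(3::nat) dvd p" unfolding Q_def using prime_dvd_power[of "3::nat" p r] by simp
      hence "(3::nat) = 1 \<or> 3 = p" using assms(1) unfolding prime_nat_iff by blast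
      thus False using assms(2) by simp
    qed
    hence Q2: "Q mod 3 = 2" using nm Q_def by presburger
    define s where "s = Q div 3"
    have Qs: "Q - 1 = 3 * s + 1" using Q2 s_def by presburger
    have cinj: "inj_on (\<lambda>x::'a. x ^ 3) K"
    proof (rule inj_onI)
      fix x y :: 'a assume x: "x \<in> K" and y: "y \<in> K" and e: "x ^ 3 = y ^ 3"
      show "x = y"
      proof (cases "y = 0")
        case True thus ?thesis using e by simp
      next
        case False
        define t where "t = x / y"
        have tK: "t \<in> K" using Kdiv x y t_def by simp
        have t3: "t ^ 3 = 1" using e False by (simp add: t_def power_divide)
        hence t0: "t \<noteq> 0" by auto
        have "t ^ (Q - 1) * t = t" using tK Kmem Q1
          by (metis One_nat_def Suc_diff_1 less_trans mult.commute power_Suc zero_less_one)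
        hence tQ: "t ^ (Q - 1) = 1" using t0 by simp
        have "t ^ (Q - 1) = (t ^ 3) ^ s * t" unfolding Qs by (simp add: power_mult power_add)
        hence "t = 1" using tQ t3 by simp
        thus ?thesis using False t_def by simp
      qed
    qed
    have cimg: "(\<lambda>x::'a. x ^ 3) ` K = K"
      by (rule endo_inj_surj[OF Kfin _ cinj]) (auto simp: power3_eq_cube intro: Kmul)
    define \<Phi> where "\<Phi> = (\<lambda>(x::'a, y::'a, z::'a). (x^3, y^3, z^3))"
    have cardPhi: "card {v. v \<in> K \<times> K \<times> K \<and> R (\<Phi> v)} = card {u. u \<in> K \<times> K \<times> K \<and> R u}" for R
    proof -
      have img: "\<Phi> ` {v. v \<in> K \<times> K \<times> K \<and> R (\<Phi> v)} = {u. u \<in> K \<times> K \<times> K \<and> R u}"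
      proof
        show "\<Phi> ` {v. v \<in> K \<times> K \<times> K \<and> R (\<Phi> v)} \<subseteq> {u. u \<in> K \<times> K \<times> K \<and> R u}"
          using cimg by (auto simp: \<Phi>_def)
        show "{u. u \<in> K \<times> K \<times> K \<and> R u} \<subseteq> \<Phi> ` {v. v \<in> K \<times> K \<times> K \<and> R (\<Phi> v)}"
        proof
          fix u assume u: "u \<in> {u. u \<in> K \<times> K \<times> K \<and> R u}"
          obtain u1 u2 u3 where uu: "u = (u1,u2,u3)" by (cases u) auto
          have "u1 \<in> (\<lambda>x::'a. x ^ 3) ` K" "u2 \<in> (\<lambda>x::'a. x ^ 3) ` K" "u3 \<in> (\<lambda>x::'a. x ^ 3) ` K"
            using u uu cimg by auto
          then obtain x y z where xyz: "x \<in> K" "y \<in> K" "z \<in> K" "u1 = x^3" "u2 = y^3" "u3 = z^3" by blast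
          have "\<Phi> (x,y,z) = u" using xyz uu by (simp add: \<Phi>_def)
          moreover have "(x,y,z) \<in> {v. v \<in> K \<times> K \<times> K \<and> R (\<Phi> v)}" using xyz u calculation by simp
          ultimately show "u \<in> \<Phi> ` {v. v \<in> K \<times> K \<times> K \<and> R (\<Phi> v)}" by blast
        qed
      qed
      have inj: "inj_on \<Phi> {v. v \<in> K \<times> K \<times> K \<and> R (\<Phi> v)}"
        using cinj by (auto simp: inj_on_def \<Phi>_def)
      show ?thesis using card_image[OF inj] unfolding img by (rule sym)
    qed
    have "card K > 0" using K0 Kfin card_gt_0_iff by blast
    hence cardK: "card K = Q" using cardK1 Q1 by arith
    define R1 where "R1 = (\<lambda>(u1::'a, u2::'a, u3::'a). (u1, u2, u3) \<noteq> (0,0,0) \<and> a * u1 + b * u2 = u3)"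
    define R2 where "R2 = (\<lambda>(u1::'a, u2::'a, u3::'a). (u1, u2, u3) \<noteq> (0,0,0) \<and> a * u1 + b * u2 = u3 \<and> u1 * u2 * u3 = 0)"
    have D_eq: "D = {v. v \<in> K \<times> K \<times> K \<and> R1 (\<Phi> v)}"
      by (auto simp: D_def PC_def R1_def \<Phi>_def)
    have B_eq: "B = {v. v \<in> K \<times> K \<times> K \<and> R2 (\<Phi> v)}"
      by (auto simp: B_def PB_def R2_def \<Phi>_def)
    define L0 where "L0 = {u. u \<in> K \<times> K \<times> K \<and> (\<lambda>(u1, u2, u3). a * u1 + b * u2 = u3) u}"
    have L0_img: "L0 = (\<lambda>(x, y). (x, y, a * x + b * y)) ` (K \<times> K)"
      by (auto simp: L0_def intro: Kadd Kmul aK bK)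
    have cL0: "card L0 = Q * Q"
    proof -
      have "inj_on (\<lambda>(x, y). (x, y, a * x + b * y)) (K \<times> K)" by (auto simp: inj_on_def)
      thus ?thesis unfolding L0_img using cardK by (simp add: card_image card_cartesian_product)
    qed
    have cD: "card D = Q * Q - 1"
    proof -
      have "{u. u \<in> K \<times> K \<times> K \<and> R1 u} = L0 - {(0,0,0)}" by (auto simp: L0_def R1_def)
      moreover have "(0,0,0) \<in> L0" using K0 by (simp add: L0_def)
      ultimately show ?thesis using D_eq cardPhi[of R1] cL0 by (simp add: L0_def)
    qed
    define S1 where "S1 = (\<lambda>y. (0::'a, y, b * y)) ` Kx"
    define S2 where "S2 = (\<lambda>x. (x, 0::'a, a * x)) ` Kx"
    define S3 where "S3 = (\<lambda>x. (x, - (a * x) / b, 0::'a)) ` Kx"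
    have cS1: "card S1 = Q - 1" unfolding S1_def using eqs by (subst card_image) (auto simp: inj_on_def)
    have cS2: "card S2 = Q - 1" unfolding S2_def using eqs by (subst card_image) (auto simp: inj_on_def)
    have cS3: "card S3 = Q - 1" unfolding S3_def using eqs by (subst card_image) (auto simp: inj_on_def)
    have LB: "{u. u \<in> K \<times> K \<times> K \<and> R2 u} = S1 \<union> S2 \<union> S3"
    proof
      show "{u. u \<in> K \<times> K \<times> K \<and> R2 u} \<subseteq> S1 \<union> S2 \<union> S3"
      proof
        fix u assume u: "u \<in> {u. u \<in> K \<times> K \<times> K \<and> R2 u}"
        obtain u1 u2 u3 where uu: "u = (u1,u2,u3)" by (cases u) auto
        have mem: "u1 \<in> K" "u2 \<in> K" "u3 \<in> K" and nz: "(u1,u2,u3) \<noteq> (0,0,0)"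
          and eq: "a * u1 + b * u2 = u3" and pr: "u1 = 0 \<or> u2 = 0 \<or> u3 = 0"
          using u uu by (auto simp: R2_def)
        show "u \<in> S1 \<union> S2 \<union> S3"
        proof (cases "u1 = 0")
          case True
          hence "u2 \<noteq> 0" using nz eq by auto
          hence "u \<in> S1" unfolding S1_def uu using True eq mem
            by (intro image_eqI[of _ _ u2]) (auto simp: Kx_def)
          thus ?thesis by blast
        next
          case u1: False
          show ?thesis
          proof (cases "u2 = 0")
            case True
            hence "u \<in> S2" unfolding S2_def uu using u1 eq mem
              by (intro image_eqI[of _ _ u1]) (auto simp: Kx_def)
            thus ?thesis by blast
          next
            case False
            hence "u3 = 0" using pr u1 by simp
            hence "u2 = - (a * u1) / b" using eq assms(6) by (simp add: field_simps eq_neg_iff_add_eq_0)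
            hence "u \<in> S3" unfolding S3_def uu using u1 mem \<open>u3 = 0\<close>
              by (intro image_eqI[of _ _ u1]) (auto simp: Kx_def)
            thus ?thesis by blast
          qed
        qed
      qed
      show "S1 \<union> S2 \<union> S3 \<subseteq> {u. u \<in> K \<times> K \<times> K \<and> R2 u}"
        using assms(5,6) aK bK K0
        by (auto simp: S1_def S2_def S3_def Kx_def R2_def intro: Kmul Kneg Kdiv)
    qed
    have cB: "card B = 3 * (Q - 1)"
    proof -
      have d12: "S1 \<inter> S2 = {}" by (auto simp: S1_def S2_def Kx_def)
      have d3: "(S1 \<union> S2) \<inter> S3 = {}" using assms(5,6) by (auto simp: S1_def S2_def S3_def Kx_def)
      have "card (S1 \<union> S2 \<union> S3) = card S1 + card S2 + card S3"
        using d12 d3 by (simp add: card_Un_disjoint S1_def S2_def S3_def)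
      thus ?thesis using B_eq cardPhi[of R2] LB cS1 cS2 cS3 by simp
    qed
    have QQ: "real (Q * Q - 1) = real Q * real Q - 1" using Q1 by (simp add: of_nat_diff)
    have Q1r: "real (Q - 1) = real Q - 1" using Q1 by (simp add: of_nat_diff)
    have e1: "real NF * (real m * real (Q - 1)) = real m ^ 3 * ((real Q * real Q - 1) - 3 * real (Q - 1)) + real m ^ 2 * (3 * real (Q - 1))"
      using main cD cB QQ by simp
    have e2: "real m ^ 3 * ((real Q * real Q - 1) - 3 * real (Q - 1)) + real m ^ 2 * (3 * real (Q - 1))
       = (real m ^ 2 * (real Q - 2) + 3 * real m) * (real m * real (Q - 1))"
      unfolding Q1r by (simp add: algebra_simps power2_eq_square power3_eq_cube)
    have "real NF * (real m * real (Q - 1)) = (real m ^ 2 * (real Q - 2) + 3 * real m) * (real m * real (Q - 1))"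
      using e1 e2 by simp
    hence "real NF = real m ^ 2 * (real Q - 2) + 3 * real m" using Rpos Mpos by simp
    thus ?thesis unfolding m(2) Q_def by (simp add: power2_eq_square)
  qed
  show ?thesis unfolding eNF eNC ek using part1 part2 by simp
qed
end
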